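(* Let $\mu$ be a $\sigma$-finite positive measure on $(\Omega,\mathcal B)$, written as $\mu=\mu_c+\mu_a$ where $\mu_c$ has no atoms and $\mu_a$ is purely atomic (so $\mu_c$ is the restriction of $\mu$ to the complement $C$ of the union of the atoms of $\mu$). Let $\nu$ be a $\sigma$-finite signed measure on $(\Omega,\mathcal B)$ satisfying condition $(\mathcal L)$ with respect to $\mu$. Then $\frac{d\nu}{d\mu_c}$ is constant, i.e. the restriction of $\nu$ to $C$ has Radon–Nikodym derivative with respect to $\mu_c$ which is $\mu_c$-a.e. equal to a constant.
   Context: A $\sigma$-finite signed measure is a countably additive extended-real-valued set function vanishing on $\emptyset$, taking at most one of the values $\pm\infty$, with $\sigma$-finite total variation. An atom of $\mu$ is a set $A\in\mathcal B$ with $\mu(A)>0$ such that every measurable $B\subset A$ has $\mu(B)\in\{0,\mu(A)\}$. $\nu$ satisfies $(\mathcal L)$ with respect to $\mu$ if for all $A,B\in\mathcal B$ with $\mu(A)=\mu(B)\neq\pm\infty$ one has $\nu(A)=\nu(B)\neq\pm\infty$. *)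

theory Defs
  imports "HOL-Probability.Probability"
begin

definition atom :: "'a measure \<Rightarrow> 'a set \<Rightarrow> bool" where
  "atom M A \<longleftrightarrow> A \<in> sets M \<and> emeasure M A > 0 \<and>
     (\<forall>B\<in>sets M. B \<subseteq> A \<longrightarrow> emeasure M B = 0 \<or> emeasure M B = emeasure M A)"

definition atomless :: "'a measure \<Rightarrow> bool" where
  "atomless M \<longleftrightarrow> \<not> (\<exists>A. atom M A)"

definition purely_atomic :: "'a measure \<Rightarrow> bool" where
  "purely_atomic M \<longleftrightarrow> (\<forall>B\<in>sets M. emeasure M B > 0 \<longrightarrow> (\<exists>A. atom M A \<and> A \<subseteq> B))"

definition total_variation :: "'a measure \<Rightarrow> ('a set \<Rightarrow> ereal) \<Rightarrow> 'a set \<Rightarrow> ereal" where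
  "total_variation M \<nu> E =
     (SUP F \<in> {F. finite F \<and> F \<subseteq> sets M \<and> disjoint F \<and> \<Union>F = E}. \<Sum>B\<in>F. \<bar>\<nu> B\<bar>)"

definition signed_measure :: "'a measure \<Rightarrow> ('a set \<Rightarrow> ereal) \<Rightarrow> bool" where
  "signed_measure M \<nu> \<longleftrightarrow>
     \<nu> {} = 0 \<and>
     \<not> (\<exists>A\<in>sets M. \<exists>B\<in>sets M. \<nu> A = \<infinity> \<and> \<nu> B = -\<infinity>) \<and>
     (\<forall>A::nat \<Rightarrow> 'a set. range A \<subseteq> sets M \<longrightarrow> disjoint_family A \<longrightarrow>
        (\<lambda>n. \<nu> (A n)) sums \<nu> (\<Union>n. A n))"

definition sigma_finite_signed_measure :: "'a measure \<Rightarrow> ('a set \<Rightarrow> ereal) \<Rightarrow> bool" where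
  "sigma_finite_signed_measure M \<nu> \<longleftrightarrow> signed_measure M \<nu> \<and>
     (\<exists>\<Omega>::nat \<Rightarrow> 'a set. range \<Omega> \<subseteq> sets M \<and> (\<Union>n. \<Omega> n) = space M \<and>
        (\<forall>n. total_variation M \<nu> (\<Omega> n) < \<infinity>))"

definition cond_L :: "'a measure \<Rightarrow> ('a set \<Rightarrow> ereal) \<Rightarrow> bool" where
  "cond_L M \<nu> \<longleftrightarrow> (\<forall>A\<in>sets M. \<forall>B\<in>sets M. emeasure M A = emeasure M B \<and> emeasure M A \<noteq> \<infinity>
      \<longrightarrow> \<nu> A = \<nu> B \<and> \<bar>\<nu> A\<bar> \<noteq> \<infinity>)"

end

theory Submission
  imports Defs
begin

lemma fin_pos: "emeasure M F < \<infinity> \<Longrightarrow> (emeasure M F > 0 \<longleftrightarrow> measure M F > 0)"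
  by (simp add: emeasure_eq_ennreal_measure)
lemma fin_eq: "emeasure M F < \<infinity> \<Longrightarrow> emeasure M G < \<infinity> \<Longrightarrow> (emeasure M F = emeasure M G \<longleftrightarrow> measure M F = measure M G)"
  by (simp add: emeasure_eq_ennreal_measure)
lemma fin_sub: "F \<subseteq> E \<Longrightarrow> E \<in> sets M \<Longrightarrow> emeasure M E < \<infinity> \<Longrightarrow> emeasure M F < \<infinity>"
  using emeasure_mono[of F E M] by auto

lemma fin_mono: "G \<subseteq> F \<Longrightarrow> G \<in> sets M \<Longrightarrow> F \<in> sets M \<Longrightarrow> emeasure M F < \<infinity> \<Longrightarrow> measure M G \<le> measure M F"
  by (rule measure_mono_fmeasurable) (auto simp: fmeasurable_def)

lemma nonatom:
  assumes C: "C \<in> sets M" and al: "atomless (restrict_space M C)"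
    and E: "E \<in> sets M" "E \<subseteq> C" "emeasure M E > 0"
  shows "\<exists>F\<in>sets M. F \<subseteq> E \<and> emeasure M F \<noteq> 0 \<and> emeasure M F \<noteq> emeasure M E"
proof -
  have CS: "C \<inter> space M \<in> sets M" using C by auto
  have "\<not> atom (restrict_space M C) E" using al unfolding atomless_def by blast
  moreover have "E \<in> sets (restrict_space M C)" using E sets_restrict_space_iff[OF CS] by auto
  moreover have "emeasure (restrict_space M C) E = emeasure M E"
    using emeasure_restrict_space[OF CS E(2)] .
  ultimately obtain F where F: "F \<in> sets (restrict_space M C)" "F \<subseteq> E"
     "emeasure (restrict_space M C) F \<noteq> 0" "emeasure (restrict_space M C) F \<noteq> emeasure M E"
    using E unfolding atom_def by auto
  have "F \<in> sets M" "F \<subseteq> C" using F(1) sets_restrict_space_iff[OF CS] by auto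
  moreover have "emeasure (restrict_space M C) F = emeasure M F"
    using emeasure_restrict_space[OF CS \<open>F \<subseteq> C\<close>] .
  ultimately show ?thesis using F by auto
qed

lemma halving:
  assumes C: "C \<in> sets M" and al: "atomless (restrict_space M C)"
    and E: "E \<in> sets M" "E \<subseteq> C" "emeasure M E < \<infinity>" "measure M E > 0"
  shows "\<exists>F\<in>sets M. F \<subseteq> E \<and> 0 < measure M F \<and> measure M F \<le> measure M E / 2^n"
proof (induction n)
  case 0
  then show ?case using E by auto
next
  case (Suc n)
  then obtain F where F: "F \<in> sets M" "F \<subseteq> E" "0 < measure M F" "measure M F \<le> measure M E / 2^n"
    by auto
  have finF: "emeasure M F < \<infinity>" using F E fin_sub by blast
  have "emeasure M F > 0" using F(3) finF fin_pos by blast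
  then obtain G where G: "G \<in> sets M" "G \<subseteq> F" "emeasure M G \<noteq> 0" "emeasure M G \<noteq> emeasure M F"
    using nonatom[OF C al F(1) _] F E by blast
  have finG: "emeasure M G < \<infinity>" using G finF F(1) fin_sub by blast
  have mG: "0 < measure M G" using G(3) finG fin_pos by (metis not_gr_zero)
  have "measure M G \<noteq> measure M F" using G(4) finG finF fin_eq by blast
  moreover have "measure M G \<le> measure M F"
    using finF F(1) G(1,2) fin_mono by blast
  ultimately have lt: "measure M G < measure M F" by simp
  have mD: "measure M (F - G) = measure M F - measure M G"
    using measure_Diff[of M F G] finF F(1) G(1,2) by auto
  have h2: "measure M F / 2 \<le> measure M E / 2^Suc n"
    using F(4) by (simp add: field_simps)
  show ?case
  proof (cases "measure M G \<le> measure M F / 2")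
    case True
    then show ?thesis using G F mG h2 by (intro bexI[of _ G]) auto
  next
    case False
    then show ?thesis using G F mD lt h2
      by (intro bexI[of _ "F - G"]) auto
  qed
qed


lemma small:
  assumes C: "C \<in> sets M" and al: "atomless (restrict_space M C)"
    and E: "E \<in> sets M" "E \<subseteq> C" "emeasure M E < \<infinity>" "measure M E > 0" and e: "e > 0"
  shows "\<exists>F\<in>sets M. F \<subseteq> E \<and> 0 < measure M F \<and> measure M F < e"
proof -
  obtain n :: nat where n: "measure M E / e < 2^n" using real_arch_pow[of "2::real"] by auto
  then have "measure M E < e * 2^n" using e by (simp add: pos_divide_less_eq mult.commute)
  then have lt: "measure M E / 2^n < e" by (simp add: divide_less_eq)
  obtain F where "F\<in>sets M" "F \<subseteq> E" "0 < measure M F" "measure M F \<le> measure M E / 2^n"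
    using halving[OF C al E, of n] by blast
  then show ?thesis using lt by (intro bexI[of _ F]) auto
qed
lemma sierp:
  assumes C: "C \<in> sets M" and al: "atomless (restrict_space M C)"
    and B: "B \<in> sets M" "B \<subseteq> C" "emeasure M B < \<infinity>" and t: "0 \<le> t" "t \<le> measure M B"
  shows "\<exists>D\<in>sets M. D \<subseteq> B \<and> measure M D = t"
proof -
  define Sv where "Sv D = {measure M E | E. E \<in> sets M \<and> E \<subseteq> B - D \<and> measure M D + measure M E \<le> t}" for D
  define s where "s D = Sup (Sv D)" for D
  define pick where "pick D = (SOME E. E \<in> sets M \<and> E \<subseteq> B - D \<and> measure M D + measure M E \<le> t \<and> s D \<le> 2 * measure M E)" for D
  have bdd: "bdd_above (Sv D)" for D
    unfolding Sv_def by (rule bdd_aboveI[of _ "t - measure M D"]) auto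
  have Sv0: "0 \<in> Sv D" if "measure M D \<le> t" for D
    unfolding Sv_def using that by (auto intro!: exI[of _ "{}"])
  have s0: "0 \<le> s D" if "measure M D \<le> t" for D
    unfolding s_def using Sv0[OF that] bdd by (rule cSup_upper)
  have pick: "pick D \<in> sets M \<and> pick D \<subseteq> B - D \<and> measure M D + measure M (pick D) \<le> t \<and> s D \<le> 2 * measure M (pick D)"
    if Dt0: "measure M D \<le> t" for D
  proof -
    have "\<exists>E. E \<in> sets M \<and> E \<subseteq> B - D \<and> measure M D + measure M E \<le> t \<and> s D \<le> 2 * measure M E"
    proof (cases "s D \<le> 0")
      case True
      then show ?thesis using Dt0 by (intro exI[of _ "{}"]) auto
    next
      case False
      then have "s D / 2 < Sup (Sv D)" unfolding s_def by simp
      then obtain x where "x \<in> Sv D" "s D / 2 < x"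
        using less_cSup_iff[OF _ bdd] Sv0[OF Dt0] by blast
      then show ?thesis unfolding Sv_def by auto
    qed
    then show ?thesis unfolding pick_def by (rule someI_ex)
  qed
  define Dn where "Dn = rec_nat {} (\<lambda>_ D. D \<union> pick D)"
  have Dn0: "Dn 0 = {}" and DnS: "Dn (Suc n) = Dn n \<union> pick (Dn n)" for n
    unfolding Dn_def by simp_all
  have finB: "emeasure M X < \<infinity>" if "X \<subseteq> B" for X using fin_sub[OF that B(1,3)] .
  have inv: "Dn n \<in> sets M \<and> Dn n \<subseteq> B \<and> measure M (Dn n) \<le> t \<and>
      measure M (Dn (Suc n)) = measure M (Dn n) + measure M (pick (Dn n))" for n
  proof (induction n)
    case 0
    have "measure M (Dn (Suc 0)) = measure M (Dn 0) + measure M (pick (Dn 0))"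
      using pick[of "{}"] t unfolding DnS Dn0 by simp
    then show ?case using t B by (simp add: Dn0)
  next
    case (Suc n)
    let ?D = "Dn n" and ?P = "pick (Dn n)"
    have P: "?P \<in> sets M" "?P \<subseteq> B - ?D" "measure M ?D + measure M ?P \<le> t"
      using pick[of ?D] Suc by auto
    have D1: "Dn (Suc n) \<in> sets M" "Dn (Suc n) \<subseteq> B" "measure M (Dn (Suc n)) \<le> t"
      using P Suc unfolding DnS by auto
    have P1: "pick (Dn (Suc n)) \<in> sets M" "pick (Dn (Suc n)) \<subseteq> B - Dn (Suc n)"
      using pick[OF D1(3)] by auto
    have "measure M (Dn (Suc (Suc n))) = measure M (Dn (Suc n)) + measure M (pick (Dn (Suc n)))"
    proof -
      have "emeasure M (pick (Dn (Suc n))) < \<infinity>" "emeasure M (Dn (Suc n)) < \<infinity>"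
        using finB P1(2) D1(2) by blast+
      then show ?thesis unfolding DnS[of "Suc n"] using P1 D1
        by (intro measure_Union) auto
    qed
    then show ?case using D1 by simp
  qed
  have pinc: "s (Dn n) \<le> 2 * measure M (pick (Dn n))" "0 \<le> s (Dn n)" for n
    using pick[of "Dn n"] s0[of "Dn n"] inv[of n] by auto
  have inc: "incseq Dn" by (rule incseq_SucI) (simp add: DnS)
  define D where "D = (\<Union>n. Dn n)"
  have rng: "range Dn \<subseteq> sets M" using inv by blast
  have DnB: "Dn n \<subseteq> B" for n using inv by blast
  have Dnt: "measure M (Dn n) \<le> t" for n using inv by blast
  have Dnstep: "measure M (Dn (Suc n)) = measure M (Dn n) + measure M (pick (Dn n))" for n using inv by blast
  have D: "D \<in> sets M" "D \<subseteq> B" unfolding D_def using rng DnB by (blast, blast)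
  have finD: "emeasure M (\<Union> (range Dn)) \<noteq> \<infinity>" using finB[OF D(2)] unfolding D_def by simp
  have lim: "(\<lambda>n. measure M (Dn n)) \<longlonglongrightarrow> measure M D"
    unfolding D_def by (rule Lim_measure_incseq[OF rng inc finD])
  have Dt: "measure M D \<le> t" using lim Dnt by (intro LIMSEQ_le_const2) auto
  have "(\<lambda>n. measure M (Dn (Suc n)) - measure M (Dn n)) \<longlonglongrightarrow> measure M D - measure M D"
    by (rule tendsto_diff[OF LIMSEQ_Suc[OF lim] lim])
  moreover have "(\<lambda>n. measure M (Dn (Suc n)) - measure M (Dn n)) = (\<lambda>n. measure M (pick (Dn n)))"
    using Dnstep by (intro ext) (simp only: add_diff_cancel_left')
  ultimately have "(\<lambda>n. measure M (pick (Dn n))) \<longlonglongrightarrow> 0" by simp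
  then have "(\<lambda>n. 2 * measure M (pick (Dn n))) \<longlonglongrightarrow> 2 * 0"
    by (rule tendsto_mult[OF tendsto_const])
  then have up: "(\<lambda>n. 2 * measure M (pick (Dn n))) \<longlonglongrightarrow> 0" by simp
  have slim: "(\<lambda>n. s (Dn n)) \<longlonglongrightarrow> 0"
    by (rule real_tendsto_sandwich[OF always_eventually always_eventually tendsto_const up])
       (use pinc in blast)+
  show ?thesis
  proof (cases "measure M D < t")
    case True
    have finBD: "emeasure M B \<noteq> \<infinity>" using B(3) by simp
    have mBD: "measure M (B - D) = measure M B - measure M D"
      by (rule measure_Diff[OF finBD B(1) D(1) D(2)])
    have "B - D \<in> sets M" using B(1) D(1) by blast
    moreover have "B - D \<subseteq> C" using B(2) by blast
    moreover have "emeasure M (B - D) < \<infinity>" using finB[of "B - D"] by blast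
    moreover have "measure M (B - D) > 0" using mBD True t by linarith
    ultimately obtain E where
      E: "E \<in> sets M" "E \<subseteq> B - D" "0 < measure M E" "measure M E < t - measure M D"
      using small[OF C al, of "B - D" "t - measure M D"] True by auto
    have "measure M E \<le> s (Dn n)" for n
    proof -
      have sub: "Dn n \<subseteq> D" unfolding D_def by blast
      have "measure M (Dn n) \<le> measure M D"
        using fin_mono[OF sub _ D(1) finB[OF D(2)]] rng by blast
      moreover have "E \<subseteq> B - Dn n" using E(2) sub by blast
      ultimately have "measure M E \<in> Sv (Dn n)"
        unfolding Sv_def using E(1,4) by force
      then show ?thesis unfolding s_def using bdd by (rule cSup_upper)
    qed
    then have "measure M E \<le> 0" using slim by (intro LIMSEQ_le_const) auto
    then show ?thesis using E by simp
  next
    case False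
    then show ?thesis using Dt D by auto
  qed
qed



lemma additive_linear:
  fixes f :: "real \<Rightarrow> real"
  assumes T: "0 < T" "T \<le> L"
    and add: "\<And>s u. 0 \<le> s \<Longrightarrow> 0 \<le> u \<Longrightarrow> s + u \<le> L \<Longrightarrow> f (s + u) = f s + f u"
    and bnd: "\<And>s. 0 \<le> s \<Longrightarrow> s \<le> T \<Longrightarrow> \<bar>f s\<bar> \<le> K"
    and s: "0 \<le> s" "s \<le> L"
  shows "f s = s * (f T / T)"
proof -
  define c where "c = f T / T"
  define g where "g x = f x - x * c" for x
  define K' where "K' = K + T * \<bar>c\<bar>"
  have gadd: "g (x + y) = g x + g y" if "0 \<le> x" "0 \<le> y" "x + y \<le> L" for x y
    using add[OF that] unfolding g_def by (simp add: algebra_simps)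
  have gb: "\<bar>g x\<bar> \<le> K'" if "0 \<le> x" "x \<le> T" for x
  proof -
    have "\<bar>x * c\<bar> \<le> T * \<bar>c\<bar>" using that by (simp add: abs_mult mult_right_mono)
    then show ?thesis using bnd[OF that] unfolding g_def K'_def by linarith
  qed
  have K'0: "0 \<le> K'" using gb[of 0] T by linarith
  have gT: "g T = 0" unfolding g_def c_def using T by simp
  have g0: "g 0 = 0" using gadd[of 0 0] T by simp
  have gmult: "g (real k * x) = real k * g x" if "0 \<le> x" "real k * x \<le> L" for k x
    using that
  proof (induction k)
    case 0 then show ?case using g0 by simp
  next
    case (Suc k)
    have "real k * x \<le> real (Suc k) * x" using Suc.prems by (simp add: mult_right_mono)
    then have "real k * x \<le> L" using Suc.prems by linarith
    have eq: "real (Suc k) * x = real k * x + x" by (simp add: algebra_simps)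
    have "g (real (Suc k) * x) = g (real k * x) + g x"
      unfolding eq using Suc.prems by (intro gadd) (auto simp: eq[symmetric])
    then show ?case using Suc.IH[OF Suc.prems(1) \<open>real k * x \<le> L\<close>] by (simp add: algebra_simps)
  qed
  have gsmall: "\<bar>g r\<bar> \<le> K' / 2^n" if "0 \<le> r" "r \<le> T / 2^n" for r n
  proof -
    have le: "real (2^n) * r \<le> T" using that by (simp add: field_simps)
    have "g (real (2^n) * r) = real (2^n) * g r" using gmult[of r "2^n"] le T that by linarith
    moreover have "\<bar>g (real (2^n) * r)\<bar> \<le> K'" using gb[OF _ le] that by simp
    ultimately have "2^n * \<bar>g r\<bar> \<le> K'" by (simp add: abs_mult)
    then show ?thesis by (simp add: field_simps)
  qed
  have gu: "g (T / 2^n) = 0" for n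
  proof -
    have "g (real (2^n) * (T / 2^n)) = real (2^n) * g (T / 2^n)"
      using gmult[of "T / 2^n" "2^n"] T by simp
    then show ?thesis using gT by simp
  qed
  have "g s = 0"
  proof (rule ccontr)
    assume ne: "g s \<noteq> 0"
    obtain n :: nat where n: "K' / \<bar>g s\<bar> < 2^n" using real_arch_pow[of "2::real"] by auto
    then have lt: "K' / 2^n < \<bar>g s\<bar>" using ne by (simp add: field_simps)
    define u where "u = T / 2^n"
    have u0: "0 < u" unfolding u_def using T by simp
    define k where "k = nat \<lfloor>s / u\<rfloor>"
    have rk: "real k = of_int \<lfloor>s / u\<rfloor>" unfolding k_def using s u0 by simp
    have k1: "real k * u \<le> s" using rk u0 by (simp add: pos_le_divide_eq[symmetric])
    have k2: "s < real k * u + u"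
    proof -
      have "s / u < real k + 1" using rk by linarith
      then show ?thesis using u0 by (simp add: field_simps)
    qed
    define r where "r = s - real k * u"
    have r: "0 \<le> r" "r \<le> T / 2^n" using k1 k2 unfolding r_def u_def by auto
    have ku0: "0 \<le> real k * u" using u0 by simp
    have "g s = g (real k * u) + g r"
      using gadd[OF ku0 r(1)] s unfolding r_def by simp
    also have "g (real k * u) = real k * g u" using gmult[OF _ ] u0 k1 s by simp
    also have "g u = 0" unfolding u_def by (rule gu)
    finally have "g s = g r" by simp
    then show False using gsmall[OF r] lt by simp
  qed
  then show ?thesis unfolding g_def c_def by simp
qed



lemma nu_add:
  assumes sm: "signed_measure M \<nu>" and A: "A \<in> sets M" and B: "B \<in> sets M" and dj: "A \<inter> B = {}"
  shows "\<nu> (A \<union> B) = \<nu> A + \<nu> B"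
proof -
  define X where "X n = (if n = 0 then A else if n = 1 then B else {})" for n :: nat
  have X0: "X 0 = A" and X1: "X 1 = B" and X2: "n \<ge> 2 \<Longrightarrow> X n = {}" for n unfolding X_def by auto
  have "range X \<subseteq> sets M" using A B unfolding X_def by auto
  moreover have "disjoint_family X" using dj unfolding X_def disjoint_family_on_def by auto
  ultimately have s1: "(\<lambda>n. \<nu> (X n)) sums \<nu> (\<Union>n. X n)" using sm unfolding signed_measure_def by blast
  have un: "(\<Union>n. X n) = A \<union> B"
  proof
    show "(\<Union>n. X n) \<subseteq> A \<union> B" unfolding X_def by auto
    show "A \<union> B \<subseteq> (\<Union>n. X n)" using X0 X1 by blast
  qed
  have e: "\<nu> {} = 0" using sm unfolding signed_measure_def by blast
  have s2: "(\<lambda>n. \<nu> (X n)) sums (\<Sum>n\<in>{0,1}. \<nu> (X n))"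
  proof (rule sums_finite)
    show "\<nu> (X n) = 0" if "n \<notin> {0, 1}" for n using that X2[of n] e by simp
  qed simp
  have "\<nu> (A \<union> B) = (\<Sum>n\<in>{0,1}. \<nu> (X n))" using sums_unique2[OF s1 s2] un by simp
  moreover have "(\<Sum>n\<in>{0,1}. \<nu> (X n)) = \<nu> A + \<nu> B" by (simp add: X_def)
  ultimately show ?thesis by simp
qed

lemma nu_null:
  assumes L: "cond_L M \<nu>" and sm: "signed_measure M \<nu>" and A: "A \<in> sets M" "emeasure M A = 0"
  shows "\<nu> A = 0"
proof -
  have "emeasure M A = emeasure M {} \<and> emeasure M A \<noteq> \<infinity>" using A by simp
  then have "\<nu> A = \<nu> {}" using L[unfolded cond_L_def, rule_format, OF A(1) sets.empty_sets] by blast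
  then show ?thesis using sm unfolding signed_measure_def by simp
qed

lemma nu_fin:
  assumes L: "cond_L M \<nu>" and A: "A \<in> sets M" "emeasure M A < \<infinity>"
  shows "\<bar>\<nu> A\<bar> \<noteq> \<infinity>"
proof -
  have "emeasure M A = emeasure M A \<and> emeasure M A \<noteq> \<infinity>" using A by simp
  from L[unfolded cond_L_def, rule_format, OF A(1) A(1) this] show ?thesis by (rule conjunct2)
qed

lemma nu_eq:
  assumes L: "cond_L M \<nu>" and A: "A \<in> sets M" "B \<in> sets M" "emeasure M A = emeasure M B" "emeasure M A < \<infinity>"
  shows "\<nu> A = \<nu> B"
proof -
  have "emeasure M A = emeasure M B \<and> emeasure M A \<noteq> \<infinity>" using A by simp
  then show ?thesis using L[unfolded cond_L_def, rule_format, OF A(1) A(2)] by blast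
qed

lemma tv_bound:
  assumes D: "D \<in> sets M" "W \<in> sets M" "D \<subseteq> W"
  shows "\<bar>\<nu> D\<bar> \<le> total_variation M \<nu> W"
proof -
  let ?F = "{D, W - D}"
  have "disjoint ?F" unfolding disjoint_def by blast
  moreover have "finite ?F" "?F \<subseteq> sets M" "\<Union>?F = W" using D by auto
  ultimately have "?F \<in> {F. finite F \<and> F \<subseteq> sets M \<and> disjoint F \<and> \<Union>F = W}" by blast
  then have le: "(\<Sum>B\<in>?F. \<bar>\<nu> B\<bar>) \<le> total_variation M \<nu> W"
    unfolding total_variation_def by (rule SUP_upper)
  have "\<bar>\<nu> D\<bar> \<le> (\<Sum>B\<in>?F. \<bar>\<nu> B\<bar>)"
  proof (cases "D = W - D")
    case True then show ?thesis by simp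
  next
    case False then show ?thesis by (simp add: add_increasing2)
  qed
  then show ?thesis using le by (rule order_trans)
qed



theorem proposition1p4:
  fixes M :: "'a measure" and \<nu> :: "'a set \<Rightarrow> ereal" and C :: "'a set"
  assumes "sigma_finite_measure M"
    and "C \<in> sets M"
    and "atomless (restrict_space M C)"
    and "purely_atomic (restrict_space M (space M - C))"
    and "sigma_finite_signed_measure M \<nu>"
    and "cond_L M \<nu>"
  shows "\<exists>c::real. \<forall>A\<in>sets M. \<nu> (A \<inter> C) = ereal c * enn2ereal (emeasure M (A \<inter> C))"
proof -
  have sm: "signed_measure M \<nu>" using assms(5) unfolding sigma_finite_signed_measure_def by blast
  obtain Om :: "nat \<Rightarrow> 'a set" where Om: "range Om \<subseteq> sets M" "(\<Union>n. Om n) = space M"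
      "\<And>n. total_variation M \<nu> (Om n) < \<infinity>"
    using assms(5) unfolding sigma_finite_signed_measure_def by blast
  obtain F :: "nat \<Rightarrow> 'a set" where F: "range F \<subseteq> sets M" "\<Union>(range F) = space M" "\<And>i. emeasure M (F i) \<noteq> \<infinity>"
      "disjoint_family F"
    using sigma_finite_measure.sigma_finite_disjoint[OF assms(1)] by blast
  have Csp: "C \<subseteq> space M" using sets.sets_into_space[OF assms(2)] .
  show ?thesis
  proof (cases "emeasure M C = 0")
    case True
    show ?thesis
    proof (intro exI[of _ 0] ballI)
      fix A assume A: "A \<in> sets M"
      have AC: "A \<inter> C \<in> sets M" using A assms(2) by blast
      have "emeasure M (A \<inter> C) \<le> emeasure M C" using emeasure_mono[of "A \<inter> C" C M] assms(2) by blast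
      then have "emeasure M (A \<inter> C) = 0" using True by simp
      then have "\<nu> (A \<inter> C) = 0" using nu_null[OF assms(6) sm AC] by blast
      then show "\<nu> (A \<inter> C) = ereal 0 * enn2ereal (emeasure M (A \<inter> C))" by simp
    qed
  next
    case False
    have "\<exists>n. emeasure M (C \<inter> Om n) \<noteq> 0"
    proof (rule ccontr)
      assume "\<not> ?thesis"
      then have "emeasure M (\<Union>n. C \<inter> Om n) = 0" using Om(1) assms(2)
        by (intro emeasure_UN_eq_0) auto
      moreover have "(\<Union>n. C \<inter> Om n) = C" using Om(2) Csp by auto
      ultimately show False using False by simp
    qed
    then obtain n where n: "emeasure M (C \<inter> Om n) \<noteq> 0" by blast
    have COn: "C \<inter> Om n \<in> sets M" using Om(1) assms(2) by blast
    have "\<exists>k. emeasure M (C \<inter> Om n \<inter> F k) \<noteq> 0"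
    proof (rule ccontr)
      assume "\<not> ?thesis"
      then have "emeasure M (\<Union>k. C \<inter> Om n \<inter> F k) = 0" using F(1) COn
        by (intro emeasure_UN_eq_0) auto
      moreover have "(\<Union>k. C \<inter> Om n \<inter> F k) = C \<inter> Om n" using F(2) Csp by auto
      ultimately show False using n by simp
    qed
    then obtain k where k: "emeasure M (C \<inter> Om n \<inter> F k) \<noteq> 0" by blast
    define E0 where "E0 = C \<inter> Om n \<inter> F k"
    have E0s: "E0 \<in> sets M" "E0 \<subseteq> C" "E0 \<subseteq> Om n" unfolding E0_def using COn F(1) by auto
    have E0f: "emeasure M E0 < \<infinity>"
      using fin_sub[of E0 "F k" M] F(1,3) unfolding E0_def by (auto simp: less_top[symmetric])
    have E0p: "measure M E0 > 0" using k E0f fin_pos[OF E0f] unfolding E0_def by (simp add: zero_less_iff_neq_zero)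
    define T where "T = measure M E0"
    define V where "V D = real_of_ereal (\<nu> D)" for D
    define f where "f t = V (SOME D. D \<in> sets M \<and> D \<subseteq> C \<and> emeasure M D = ennreal t)" for t
    have F1: "f (measure M D) = V D" if D: "D \<in> sets M" "D \<subseteq> C" "emeasure M D < \<infinity>" for D
    proof -
      have ex: "\<exists>D'. D' \<in> sets M \<and> D' \<subseteq> C \<and> emeasure M D' = ennreal (measure M D)"
        using D emeasure_eq_ennreal_measure[of M D] by (intro exI[of _ D]) auto
      define D' where "D' = (SOME D'. D' \<in> sets M \<and> D' \<subseteq> C \<and> emeasure M D' = ennreal (measure M D))"
      have D': "D' \<in> sets M" "D' \<subseteq> C" "emeasure M D' = ennreal (measure M D)"
        using someI_ex[OF ex] unfolding D'_def by blast+
      have eq: "emeasure M D = emeasure M D'" using D'(3) D(3) emeasure_eq_ennreal_measure[of M D] by auto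
      have "\<nu> D = \<nu> D'" by (rule nu_eq[OF assms(6) D(1) D'(1) eq D(3)])
      then show ?thesis unfolding f_def D'_def V_def by simp
    qed
    have eV: "\<nu> D = ereal (V D)" if "D \<in> sets M" "emeasure M D < \<infinity>" for D
      using nu_fin[OF assms(6) that] unfolding V_def by (cases "\<nu> D") auto
    have Vadd: "V (A \<union> B) = V A + V B" if "A \<in> sets M" "B \<in> sets M" "emeasure M A < \<infinity>"
        "emeasure M B < \<infinity>" "A \<inter> B = {}" for A B
    proof -
      have "\<nu> (A \<union> B) = \<nu> A + \<nu> B" using nu_add[OF sm that(1,2,5)] .
      moreover have "emeasure M (A \<union> B) < \<infinity>"
        using emeasure_subadditive[OF that(1,2)] that(3,4) by (auto simp: less_top[symmetric] ennreal_add_eq_top top_unique)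
      then have "\<nu> (A \<union> B) = ereal (V (A \<union> B))" using eV that(1,2) by blast
      ultimately have "ereal (V (A \<union> B)) = ereal (V A) + ereal (V B)"
        using eV[OF that(1,3)] eV[OF that(2,4)] by simp
      then show ?thesis by simp
    qed
    have addf: "f (s + u) = f s + f u" if B: "B \<in> sets M" "B \<subseteq> C" "emeasure M B < \<infinity>"
        and su: "0 \<le> s" "0 \<le> u" "s + u \<le> measure M B" for B s u
    proof -
      obtain D where D: "D \<in> sets M" "D \<subseteq> B" "measure M D = s + u"
        using sierp[OF assms(2,3) B, of "s + u"] su by auto
      have Df: "emeasure M D < \<infinity>" using fin_sub[OF D(2) B(1,3)] .
      have DC: "D \<subseteq> C" using D B by blast
      obtain D1 where D1: "D1 \<in> sets M" "D1 \<subseteq> D" "measure M D1 = s"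
        using sierp[OF assms(2,3) D(1) DC Df, of s] su D(3) by auto
      have D1f: "emeasure M D1 < \<infinity>" using fin_sub[OF D1(2) D(1) Df] .
      have D2: "D - D1 \<in> sets M" "emeasure M (D - D1) < \<infinity>" using D(1) D1(1) fin_sub[of "D - D1" D M] Df by auto
      have mD2: "measure M (D - D1) = u"
        using measure_Diff[of M D D1] Df D(1) D1(1,2) D(3) D1(3) by simp
      have "V D = V (D1 \<union> (D - D1))" using D1(2) by (simp add: Un_absorb1 Un_Diff_cancel)
      also have "\<dots> = V D1 + V (D - D1)" using Vadd[OF D1(1) D2(1) D1f D2(2)] by blast
      finally have "V D = V D1 + V (D - D1)" .
      moreover have "f (s + u) = V D" using F1[OF D(1) DC Df] D(3) by simp
      moreover have "f s = V D1" using F1[OF D1(1) _ D1f] D1(2,3) DC by auto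
      moreover have "f u = V (D - D1)" using F1[OF D2(1) _ D2(2)] mD2 DC by auto
      ultimately show ?thesis by simp
    qed
    define K where "K = real_of_ereal (total_variation M \<nu> (Om n))"
    have bnd: "\<bar>f s\<bar> \<le> K" if s: "0 \<le> s" "s \<le> T" for s
    proof -
      obtain D where D: "D \<in> sets M" "D \<subseteq> E0" "measure M D = s"
        using sierp[OF assms(2,3) E0s(1,2) E0f, of s] s unfolding T_def by auto
      have Df: "emeasure M D < \<infinity>" using fin_sub[OF D(2) E0s(1) E0f] .
      have "\<bar>\<nu> D\<bar> \<le> total_variation M \<nu> (Om n)"
        using tv_bound[of D M "Om n" \<nu>] D E0s Om(1) by blast
      then have le: "ereal \<bar>V D\<bar> \<le> total_variation M \<nu> (Om n)" using eV[OF D(1) Df] by simp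
      then have "\<bar>V D\<bar> \<le> K" unfolding K_def using Om(3)[of n]
        by (cases "total_variation M \<nu> (Om n)") auto
      moreover have "f s = V D" using F1[OF D(1) _ Df] D E0s by auto
      ultimately show ?thesis by simp
    qed
    define c where "c = f T / T"
    have lin: "V B = c * measure M B" if B: "B \<in> sets M" "B \<subseteq> C" "emeasure M B < \<infinity>" for B
    proof (cases "T \<le> measure M B")
      case True
      have "f (measure M B) = measure M B * (f T / T)"
        by (rule additive_linear[of T "measure M B" f K]) (use True E0p T_def addf[OF B] bnd in auto)
      then show ?thesis using F1[OF B] unfolding c_def by simp
    next
      case False
      have "f (measure M B) = measure M B * (f T / T)"
        by (rule additive_linear[of T T f K]) (use False E0p T_def addf[OF E0s(1,2) E0f] bnd in auto)
      then show ?thesis using F1[OF B] unfolding c_def by simp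
    qed
    have fin_case: "\<nu> B = ereal c * enn2ereal (emeasure M B)"
      if B: "B \<in> sets M" "B \<subseteq> C" "emeasure M B < \<infinity>" for B
    proof -
      have "\<nu> B = ereal (c * measure M B)" using eV[OF B(1,3)] lin[OF B] by simp
      moreover have "emeasure M B = ennreal (measure M B)"
        by (rule emeasure_eq_ennreal_measure) (use B(3) in auto)
      then have "enn2ereal (emeasure M B) = ereal (measure M B)" by simp
      ultimately show ?thesis by simp
    qed
    show ?thesis
    proof (intro exI[of _ c] ballI)
      fix A assume A: "A \<in> sets M"
      define B where "B = A \<inter> C"
      have B: "B \<in> sets M" "B \<subseteq> C" unfolding B_def using A assms(2) by auto
      have "\<nu> B = ereal c * enn2ereal (emeasure M B)"
      proof (cases "emeasure M B < \<infinity>")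
        case True then show ?thesis using fin_case B by blast
      next
        case False
        define P where "P i = B \<inter> F i" for i
        have Ps: "range P \<subseteq> sets M" unfolding P_def using B F(1) by auto
        have Pd: "disjoint_family P" using F(4) unfolding P_def disjoint_family_on_def by auto
        have Pu: "(\<Union>i. P i) = B" unfolding P_def using F(2) B sets.sets_into_space[of B M] by auto
        have Pf: "emeasure M (P i) < \<infinity>" for i
          using fin_sub[of "P i" "F i" M] F(1,3) unfolding P_def by (auto simp: less_top[symmetric])
        have PC: "P i \<subseteq> C" for i unfolding P_def using B by auto
        have s1: "(\<lambda>i. \<nu> (P i)) sums \<nu> B" using sm Ps Pd Pu unfolding signed_measure_def by metis
        have "(\<lambda>i. emeasure M (P i)) sums emeasure M B"
          using suminf_emeasure[OF Ps Pd] Pu summable_sums[OF summableI] by metis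
        then have "(\<lambda>m. \<Sum>i<m. emeasure M (P i)) \<longlonglongrightarrow> emeasure M B" by (simp add: sums_def)
        then have "(\<lambda>m. enn2ereal (\<Sum>i<m. emeasure M (P i))) \<longlonglongrightarrow> enn2ereal (emeasure M B)"
          by (rule tendsto_enn2erealI)
        moreover have "enn2ereal (\<Sum>i<m. emeasure M (P i)) = ereal (\<Sum>i<m. measure M (P i))" for m
        proof -
          have "(\<Sum>i<m. emeasure M (P i)) = (\<Sum>i<m. ennreal (measure M (P i)))"
          proof (rule sum.cong)
            fix i show "emeasure M (P i) = ennreal (measure M (P i))"
              by (rule emeasure_eq_ennreal_measure) (use Pf[of i] in auto)
          qed simp
          also have "\<dots> = ennreal (\<Sum>i<m. measure M (P i))" by (rule sum_ennreal) simp
          finally show ?thesis by (simp add: sum_nonneg)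
        qed
        ultimately have "(\<lambda>m. ereal (\<Sum>i<m. measure M (P i))) \<longlonglongrightarrow> enn2ereal (emeasure M B)" by simp
        then have "(\<lambda>m. ereal c * ereal (\<Sum>i<m. measure M (P i))) \<longlonglongrightarrow> ereal c * enn2ereal (emeasure M B)"
          by (intro tendsto_cmult_ereal) simp_all
        moreover have "ereal c * ereal (\<Sum>i<m. measure M (P i)) = (\<Sum>i<m. \<nu> (P i))" for m
        proof -
          have "(\<Sum>i<m. \<nu> (P i)) = (\<Sum>i<m. ereal (c * measure M (P i)))"
          proof (rule sum.cong)
            fix i
            have "emeasure M (P i) = ennreal (measure M (P i))"
              by (rule emeasure_eq_ennreal_measure) (use Pf[of i] in auto)
            then show "\<nu> (P i) = ereal (c * measure M (P i))"
              using fin_case[OF _ PC Pf, of i] Ps by auto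
          qed simp
          also have "\<dots> = ereal (\<Sum>i<m. c * measure M (P i))" by (rule sum_ereal)
          finally show ?thesis by (simp add: sum_distrib_left)
        qed
        ultimately have "(\<lambda>i. \<nu> (P i)) sums (ereal c * enn2ereal (emeasure M B))"
          unfolding sums_def by simp
        then show ?thesis using s1 sums_unique2 by metis
      qed
      then show "\<nu> (A \<inter> C) = ereal c * enn2ereal (emeasure M (A \<inter> C))" unfolding B_def .
    qed
  qed
qed


end
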